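(* Let $\Omega$ be a Polish space possessing a non-Borel subset $E\subset\Omega$ (e.g. $\Omega=\mathbb{R}$), and let $\mu$ be a Borel probability measure on $\Omega$. For $x\in E$ let $T_x:=\mathbb{1}_{\{x\}}\otimes\mu$, i.e. $T_x\nu=\nu(\{x\})\mu$. Then each $T_x$ is weakly continuous, the family $\{T_x:x\in E\}$ is bounded above by the weakly continuous operator $\mathbb{1}\otimes\mu$, but its supremum $\sup_{x\in E}T_x$ in $\mathscr{L}(\mathscr{M}(\Omega))$ is not weakly continuous. In particular $\mathscr{L}(\mathscr{M}(\Omega),\sigma)$ is not order complete in this sense.
   Context: $\mathscr{M}(\Omega)$ is the Banach lattice of finite signed Borel measures; $\mathscr{L}(\mathscr{M}(\Omega))$, the bounded operators on it ordered by positivity, is an order complete vector lattice. $T$ is weakly continuous if $(T\nu)(A)=\int k(x,A)\,d\nu(x)$ for a bounded transition kernel $k$ (map $\Omega\times\mathscr{B}(\Omega)\to\mathbb{R}$, signed measure in the second variable, Borel measurable in the first, $\sup_x\lvert k\rvert(x,\Omega)<\infty$); equivalently, the norm adjoint $T^*$ maps bounded Borel functions to bounded Borel functions. $\mathscr{L}(\mathscr{M}(\Omega),\sigma)$ is the space of weakly continuous operators; $(f\otimes\mu)\nu:=\left(\int f\,d\nu\right)\mu$. *)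

theory Defs
  imports "HOL-Probability.Probability"
begin

text \<open>Finite signed Borel measures, represented as real-valued set functions that are
countably additive on the Borel sets and vanish on non-Borel sets.\<close>
definition fsm :: "('a::topological_space set \<Rightarrow> real) set" where
  "fsm = {\<nu>. \<nu> {} = 0 \<and> (\<forall>A. A \<notin> sets (borel::'a measure) \<longrightarrow> \<nu> A = 0) \<and>
     (\<forall>F::nat \<Rightarrow> 'a set. range F \<subseteq> sets borel \<and> disjoint_family F \<longrightarrow>
        (\<lambda>n. \<nu> (F n)) sums \<nu> (\<Union>n. F n))}"

definition tvnorm :: "('a::topological_space set \<Rightarrow> real) \<Rightarrow> real" where
  "tvnorm \<nu> = Sup {(\<Sum>A\<in>P. \<bar>\<nu> A\<bar>) | P. finite P \<and> P \<subseteq> sets (borel::'a measure) \<and> disjoint P}"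

text \<open>Integral of a function against a finite signed Borel measure, via any decomposition
as a difference of two finite Borel measures (independent of the choice for bounded Borel f).\<close>
definition sint :: "('a::topological_space set \<Rightarrow> real) \<Rightarrow> ('a \<Rightarrow> real) \<Rightarrow> real" where
  "sint \<nu> f = (let (m1, m2) = (SOME (m1, m2). finite_measure m1 \<and> sets m1 = sets (borel::'a measure)
        \<and> finite_measure m2 \<and> sets m2 = sets (borel::'a measure)
        \<and> (\<forall>A\<in>sets (borel::'a measure). \<nu> A = measure m1 A - measure m2 A))
     in integral\<^sup>L m1 f - integral\<^sup>L m2 f)"

definition bounded_op :: "(('a::topological_space set \<Rightarrow> real) \<Rightarrow> ('a set \<Rightarrow> real)) \<Rightarrow> bool" where
  "bounded_op T \<longleftrightarrow> (\<forall>\<nu>\<in>fsm. T \<nu> \<in> fsm) \<and>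
     (\<forall>\<nu>\<in>fsm. \<forall>\<rho>\<in>fsm. \<forall>a b::real.
        T (\<lambda>A. a * \<nu> A + b * \<rho> A) = (\<lambda>A. a * T \<nu> A + b * T \<rho> A)) \<and>
     (\<exists>C. \<forall>\<nu>\<in>fsm. tvnorm (T \<nu>) \<le> C * tvnorm \<nu>)"

definition op_le :: "(('a::topological_space set \<Rightarrow> real) \<Rightarrow> ('a set \<Rightarrow> real)) \<Rightarrow>
    (('a set \<Rightarrow> real) \<Rightarrow> ('a set \<Rightarrow> real)) \<Rightarrow> bool" where
  "op_le S T \<longleftrightarrow> (\<forall>\<nu>\<in>fsm. (\<forall>A. 0 \<le> \<nu> A) \<longrightarrow> (\<forall>A. S \<nu> A \<le> T \<nu> A))"

definition is_op_sup :: "((('a::topological_space set \<Rightarrow> real) \<Rightarrow> ('a set \<Rightarrow> real)) set) \<Rightarrow>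
    (('a set \<Rightarrow> real) \<Rightarrow> ('a set \<Rightarrow> real)) \<Rightarrow> bool" where
  "is_op_sup F S \<longleftrightarrow> bounded_op S \<and> (\<forall>T\<in>F. op_le T S) \<and>
     (\<forall>U. bounded_op U \<and> (\<forall>T\<in>F. op_le T U) \<longrightarrow> op_le S U)"

definition bounded_kernel :: "('a::topological_space \<Rightarrow> 'a set \<Rightarrow> real) \<Rightarrow> bool" where
  "bounded_kernel k \<longleftrightarrow> (\<forall>x. k x \<in> fsm) \<and>
     (\<forall>A\<in>sets (borel::'a measure). (\<lambda>x. k x A) \<in> borel_measurable borel) \<and>
     (\<exists>C. \<forall>x. tvnorm (k x) \<le> C)"

definition weakly_cont :: "(('a::topological_space set \<Rightarrow> real) \<Rightarrow> ('a set \<Rightarrow> real)) \<Rightarrow> bool" where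
  "weakly_cont T \<longleftrightarrow> bounded_op T \<and> (\<exists>k. bounded_kernel k \<and>
     (\<forall>\<nu>\<in>fsm. \<forall>A\<in>sets (borel::'a measure). T \<nu> A = sint \<nu> (\<lambda>x. k x A)))"

definition tensor :: "('a::topological_space \<Rightarrow> real) \<Rightarrow> ('a set \<Rightarrow> real) \<Rightarrow>
    (('a set \<Rightarrow> real) \<Rightarrow> ('a set \<Rightarrow> real))" where
  "tensor f \<mu> = (\<lambda>\<nu> A. sint \<nu> f * \<mu> A)"

definition as_fsm :: "'a::topological_space measure \<Rightarrow> ('a set \<Rightarrow> real)" where
  "as_fsm m = (\<lambda>A. if A \<in> sets (borel::'a measure) then measure m A else 0)"

end

theory Submission
  imports Defs
begin


lemma fsmD:
  assumes "\<nu> \<in> fsm"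
  shows fsm_empty: "\<nu> {} = 0"
    and fsm_nonborel: "A \<notin> sets (borel::'a::topological_space measure) \<Longrightarrow> \<nu> A = 0"
    and fsm_sums: "range F \<subseteq> sets (borel::'a measure) \<Longrightarrow> disjoint_family F \<Longrightarrow> (\<lambda>n. \<nu> (F n)) sums \<nu> (\<Union>n. F n)"
  using assms unfolding fsm_def by auto

lemma fsm_add2:
  fixes \<nu> :: "'a::topological_space set \<Rightarrow> real"
  assumes "\<nu> \<in> fsm" "A \<in> sets borel" "B \<in> sets borel" "A \<inter> B = {}"
  shows "\<nu> (A \<union> B) = \<nu> A + \<nu> B"
proof -
  define F where "F n = (if n = 0 then A else if n = 1 then B else {})" for n :: nat
  have r: "range F \<subseteq> sets borel" using assms by (auto simp: F_def)
  have d: "disjoint_family F" using assms(4) unfolding disjoint_family_on_def F_def by auto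
  have u: "(\<Union>n. F n) = A \<union> B"
    unfolding F_def by (auto split: if_splits)
  have s1: "(\<lambda>n. \<nu> (F n)) sums \<nu> (A \<union> B)" using fsm_sums[OF assms(1) r d] u by simp
  have s2: "(\<lambda>n. \<nu> (F n)) sums (\<Sum>n\<in>{0,1}. \<nu> (F n))"
    by (rule sums_finite) (auto simp: F_def fsm_empty[OF assms(1)])
  have "(\<Sum>n\<in>{0::nat,1}. \<nu> (F n)) = \<nu> A + \<nu> B" by (simp add: F_def)
  with s1 s2 sums_unique2 show ?thesis by metis
qed



lemma fsm_diff:
  fixes \<nu> :: "'a::topological_space set \<Rightarrow> real"
  assumes "\<nu> \<in> fsm" "A \<in> sets borel" "B \<in> sets borel"
  shows "\<nu> (A - B) = \<nu> A - \<nu> (A \<inter> B)"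
proof -
  have "A = (A - B) \<union> (A \<inter> B)" by auto
  then have "\<nu> A = \<nu> (A - B) + \<nu> (A \<inter> B)"
    using fsm_add2[OF assms(1), of "A - B" "A \<inter> B"] assms by auto
  then show ?thesis by simp
qed

lemma fsm_lin:
  assumes "\<nu> \<in> fsm" "\<rho> \<in> fsm"
  shows "(\<lambda>A. a * \<nu> A + b * \<rho> A) \<in> fsm"
  using assms unfolding fsm_def by (auto intro!: sums_add sums_mult)

lemma fsm_scale:
  assumes "\<nu> \<in> fsm"
  shows "(\<lambda>A. c * \<nu> A) \<in> fsm"
  using assms unfolding fsm_def by (auto intro!: sums_mult)

lemma fsm_partial:
  fixes \<nu> :: "'a::topological_space set \<Rightarrow> real"
  assumes "\<nu> \<in> fsm" "range A \<subseteq> sets borel"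
  shows "(\<Sum>i<n. \<nu> (disjointed A i)) = \<nu> (\<Union>i<n. A i)"
proof (induction n)
  case 0 then show ?case using fsm_empty[OF assms(1)] by simp
next
  case (Suc n)
  have e: "(\<Union>i<Suc n. A i) = (\<Union>i<n. A i) \<union> disjointed A n"
    by (auto simp: disjointed_def lessThan_Suc)
  have m1: "(\<Union>i<n. A i) \<in> sets borel" using assms(2) by auto
  have m2: "disjointed A n \<in> sets borel" using sets.range_disjointed_sets[OF assms(2)] by auto
  have "\<nu> (\<Union>i<Suc n. A i) = \<nu> (\<Union>i<n. A i) + \<nu> (disjointed A n)"
    unfolding e by (rule fsm_add2[OF assms(1) m1 m2]) (auto simp: disjointed_def)
  then show ?case using Suc by simp
qed

lemma fsm_incseq:
  fixes \<nu> :: "'a::topological_space set \<Rightarrow> real"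
  assumes "\<nu> \<in> fsm" "range A \<subseteq> sets borel" "incseq A"
  shows "(\<lambda>n. \<nu> (A n)) \<longlonglongrightarrow> \<nu> (\<Union>n. A n)"
proof -
  have r: "range (disjointed A) \<subseteq> sets borel"
    using assms(2) by (rule sets.range_disjointed_sets)
  have s: "(\<lambda>i. \<nu> (disjointed A i)) sums \<nu> (\<Union>n. A n)"
    using fsm_sums[OF assms(1) r disjoint_family_disjointed] by (simp add: UN_disjointed_eq)
  have eq: "(\<Sum>i<Suc n. \<nu> (disjointed A i)) = \<nu> (A n)" for n
  proof -
    have "(\<Union>i<Suc n. A i) = A n" using assms(3) by (auto simp: incseq_def lessThan_Suc_atMost)
    then show ?thesis using fsm_partial[OF assms(1,2), of "Suc n"] by simp
  qed
  have "(\<lambda>n. \<Sum>i<Suc n. \<nu> (disjointed A i)) \<longlonglongrightarrow> \<nu> (\<Union>n. A n)"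
    using s unfolding sums_def by (rule LIMSEQ_Suc)
  then show ?thesis using eq by simp
qed

lemma fsm_decseq:
  fixes \<nu> :: "'a::topological_space set \<Rightarrow> real"
  assumes "\<nu> \<in> fsm" "range A \<subseteq> sets borel" "decseq A"
  shows "(\<lambda>n. \<nu> (A n)) \<longlonglongrightarrow> \<nu> (\<Inter>n. A n)"
proof -
  have r: "range (\<lambda>n. - A n) \<subseteq> sets borel" using assms(2) by auto
  have i: "incseq (\<lambda>n. - A n)" using assms(3) by (auto simp: incseq_def decseq_def)
  have l: "(\<lambda>n. \<nu> (- A n)) \<longlonglongrightarrow> \<nu> (\<Union>n. - A n)" by (rule fsm_incseq[OF assms(1) r i])
  have c: "\<nu> (- X) = \<nu> UNIV - \<nu> X" if "X \<in> sets borel" for X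
    using fsm_diff[OF assms(1), of UNIV X] that by (simp add: Compl_eq_Diff_UNIV)
  have "(\<lambda>n. \<nu> UNIV - \<nu> (- A n)) \<longlonglongrightarrow> \<nu> UNIV - \<nu> (\<Union>n. - A n)"
    by (intro tendsto_intros l)
  moreover have "\<nu> UNIV - \<nu> (- A n) = \<nu> (A n)" for n using c[of "A n"] assms(2) by auto
  moreover have "\<nu> UNIV - \<nu> (\<Union>n. - A n) = \<nu> (\<Inter>n. A n)"
  proof -
    have "(\<Union>n. - A n) = - (\<Inter>n. A n)" by auto
    moreover have "(\<Inter>n. A n) \<in> sets borel" using assms(2) by auto
    ultimately show ?thesis using c[of "\<Inter>n. A n"] by simp
  qed
  ultimately show ?thesis by simp
qed

lemma as_fsm_fsm:
  assumes "finite_measure m" "sets m = sets (borel::'a::topological_space measure)"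
  shows "as_fsm m \<in> fsm"
  unfolding fsm_def as_fsm_def
proof (safe)
  fix F :: "nat \<Rightarrow> 'a set" assume "range F \<subseteq> sets borel" "disjoint_family F"
  then show "(\<lambda>n. if F n \<in> sets borel then measure m (F n) else 0) sums
         (if \<Union> (range F) \<in> sets borel then measure m (\<Union> (range F)) else 0)"
    using finite_measure.finite_measure_UNION[OF assms(1), of F] assms(2) by auto
qed auto



lemma fsm_bdd:
  fixes \<nu> :: "'a::topological_space set \<Rightarrow> real"
  assumes nu: "\<nu> \<in> fsm"
  shows "bdd_above (\<nu> ` sets borel)"
proof (rule ccontr)
  assume nb: "\<not> bdd_above (\<nu> ` sets borel)"
  define U where "U A \<longleftrightarrow> \<not> bdd_above (\<nu> ` {B\<in>sets borel. B \<subseteq> A})" for A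
  have U0: "U UNIV" using nb unfolding U_def by simp
  have step: "\<exists>B. B \<in> sets borel \<and> B \<subseteq> A \<and> 1 \<le> \<bar>\<nu> B\<bar> \<and> U (A - B)"
    if A: "A \<in> sets borel" "U A" for A
  proof -
    obtain B0 where B0: "B0 \<in> sets borel" "B0 \<subseteq> A" "\<nu> B0 > \<bar>\<nu> A\<bar> + 1"
      using A(2) unfolding U_def bdd_above_def by (auto simp: not_le)
    have dA: "\<nu> (A - B0) = \<nu> A - \<nu> B0"
      using fsm_diff[OF nu A(1) B0(1)] B0(2) by (simp add: Int_absorb1)
    show ?thesis
    proof (cases "U (A - B0)")
      case True then show ?thesis using B0 by (intro exI[of _ B0]) auto
    next
      case False
      have "U B0"
      proof (rule ccontr)
        assume "\<not> U B0"
        then obtain M1 where M1: "\<And>C. C \<in> sets borel \<Longrightarrow> C \<subseteq> B0 \<Longrightarrow> \<nu> C \<le> M1"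
          unfolding U_def bdd_above_def by auto
        from False obtain M2 where M2: "\<And>C. C \<in> sets borel \<Longrightarrow> C \<subseteq> A - B0 \<Longrightarrow> \<nu> C \<le> M2"
          unfolding U_def bdd_above_def by auto
        have "\<nu> C \<le> M1 + M2" if "C \<in> sets borel" "C \<subseteq> A" for C
        proof -
          have "\<nu> (C - B0) = \<nu> C - \<nu> (C \<inter> B0)" using fsm_diff[OF nu that(1) B0(1)] .
          moreover have "\<nu> (C \<inter> B0) \<le> M1" using M1 that B0 by auto
          moreover have "\<nu> (C - B0) \<le> M2" using M2 that B0 by auto
          ultimately show ?thesis by linarith
        qed
        then have "bdd_above (\<nu> ` {B\<in>sets borel. B \<subseteq> A})" unfolding bdd_above_def by auto
        then show False using A(2) unfolding U_def by simp
      qed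
      moreover have "A - (A - B0) = B0" using B0(2) by auto
      moreover have "1 \<le> \<bar>\<nu> (A - B0)\<bar>" using dA B0(3) by linarith
      ultimately show ?thesis using A(1) B0(1) by (intro exI[of _ "A - B0"]) auto
    qed
  qed
  then obtain f where f: "\<And>A. A \<in> sets borel \<Longrightarrow> U A \<Longrightarrow>
      f A \<in> sets borel \<and> f A \<subseteq> A \<and> 1 \<le> \<bar>\<nu> (f A)\<bar> \<and> U (A - f A)"
    by metis
  define X where "X = rec_nat UNIV (\<lambda>n Y. Y - f Y)"
  have X0: "X 0 = UNIV" and XS: "X (Suc n) = X n - f (X n)" for n by (simp_all add: X_def)
  have inv: "X n \<in> sets borel \<and> U (X n)" for n
  proof (induction n)
    case 0 then show ?case using U0 X0 by simp
  next
    case (Suc n) then show ?case using f[of "X n"] XS[of n] by auto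
  qed
  define B where "B n = f (X n)" for n
  have Bb: "B n \<in> sets borel" and Bs: "B n \<subseteq> X n" and B1: "1 \<le> \<bar>\<nu> (B n)\<bar>" for n
    using f[of "X n"] inv[of n] by (auto simp: B_def)
  have dec: "decseq X" by (rule decseq_SucI) (simp add: XS)
  have disj: "disjoint_family B"
  proof (unfold disjoint_family_on_def, intro ballI impI)
    fix m n :: nat assume "m \<noteq> n"
    have *: "B i \<inter> B j = {}" if "i < j" for i j
    proof -
      have "X j \<subseteq> X (Suc i)" using dec that by (simp add: decseq_def)
      then have "B j \<subseteq> X i - B i" using Bs[of j] XS[of i] by (auto simp: B_def)
      then show ?thesis by auto
    qed
    show "B m \<inter> B n = {}"
      using \<open>m \<noteq> n\<close> *[of m n] *[of n m] by (cases "m < n") auto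
  qed
  have "(\<lambda>n. \<nu> (B n)) sums \<nu> (\<Union>n. B n)"
    by (rule fsm_sums[OF nu _ disj]) (use Bb in auto)
  then have "(\<lambda>n. \<nu> (B n)) \<longlonglongrightarrow> 0"
    by (intro summable_LIMSEQ_zero) (auto simp: sums_iff)
  then obtain no where "\<And>n. n \<ge> no \<Longrightarrow> norm (\<nu> (B n) - 0) < 1"
    unfolding LIMSEQ_iff by (metis zero_less_one)
  from this[of no] B1[of no] show False by simp
qed



lemma fsm_hahn:
  fixes \<nu> :: "'a::topological_space set \<Rightarrow> real"
  assumes nu: "\<nu> \<in> fsm"
  shows "\<exists>Y\<in>sets borel. (\<forall>X\<in>sets borel. X \<subseteq> Y \<longrightarrow> 0 \<le> \<nu> X) \<and> (\<forall>X\<in>sets borel. X \<inter> Y = {} \<longrightarrow> \<nu> X \<le> 0)"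
proof -
  define d where "d = \<nu>"
  have bdd[intro]: "bdd_above (d`sets borel)" using fsm_bdd[OF nu] by (simp add: d_def)
  define \<gamma> where "\<gamma> = (SUP X\<in>sets borel. d X)"
  have le_\<gamma>[intro]: "X \<in> sets borel \<Longrightarrow> d X \<le> \<gamma>" for X
    by (auto simp: \<gamma>_def intro!: cSUP_upper)
  have "\<exists>X\<in>sets borel. \<gamma> - 1 / 2^n < d X" for n
    unfolding \<gamma>_def by (intro less_cSUP_iff[THEN iffD1]) auto
  then have "\<exists>f. \<forall>n. f n \<in> sets borel \<and> d (f n) > \<gamma> - 1 / 2^n"
    by metis
  then obtain E where Em[measurable]: "E n \<in> sets borel" and E: "d (E n) > \<gamma> - 1 / 2^n" for n
    by auto
  define F where "F m n = (if m \<le> n then \<Inter>i\<in>{m..n}. E i else UNIV)" for m n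
  have Fm[measurable]: "F m n \<in> sets borel" for m n
    by (auto simp: F_def)
  have diff: "d (A - B) = d A - d (A \<inter> B)" if "A \<in> sets borel" "B \<in> sets borel" for A B
    unfolding d_def by (rule fsm_diff[OF nu that])
  have union: "d (A \<union> B) = d A + d (B - A)" if "A \<in> sets borel" "B \<in> sets borel" for A B
  proof -
    have "A \<union> B = A \<union> (B - A)" by auto
    then show ?thesis using fsm_add2[OF nu, of A "B - A"] that by (auto simp: d_def)
  qed
  have 1: "\<gamma> - 2 / 2 ^ m + 1 / 2 ^ n \<le> d (F m n)" if "m \<le> n" for m n
    using that
  proof (induct rule: dec_induct)
    case base with E[of m] show ?case
      by (simp add: F_def field_simps)
  next
    case (step i)
    have F_Suc: "F m (Suc i) = F m i \<inter> E (Suc i)"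
      using \<open>m \<le> i\<close> by (auto simp: F_def le_Suc_eq)
    have "\<gamma> + (\<gamma> - 2 / 2^m + 1 / 2 ^ Suc i) \<le> (\<gamma> - 1 / 2^Suc i) + (\<gamma> - 2 / 2^m + 1 / 2^i)"
      by (simp add: field_simps)
    also have "\<dots> \<le> d (E (Suc i)) + d (F m i)"
      using E[of "Suc i"] by (intro add_mono step) auto
    also have "\<dots> = d (E (Suc i)) + d (F m i - E (Suc i)) + d (F m (Suc i))"
      using diff[of "F m i" "E (Suc i)"] by (simp add: F_Suc)
    also have "\<dots> = d (E (Suc i) \<union> F m i) + d (F m (Suc i))"
      using union[of "E (Suc i)" "F m i"] by simp
    also have "\<dots> \<le> \<gamma> + d (F m (Suc i))"
      by auto
    finally show ?case
      by auto
  qed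
  define F' where "F' m = (\<Inter>i\<in>{m..}. E i)" for m
  have F'_eq: "F' m = (\<Inter>i. F m (i + m))" for m
    by (fastforce simp: le_iff_add[of m] F'_def F_def)
  have F'm[measurable]: "F' m \<in> sets borel" for m
    by (auto simp: F'_def)
  have \<gamma>_le: "\<gamma> - 0 \<le> d (\<Union>m. F' m)"
  proof (rule LIMSEQ_le)
    show "(\<lambda>n. \<gamma> - 2 / 2 ^ n) \<longlonglongrightarrow> \<gamma> - 0"
      by (intro tendsto_intros LIMSEQ_divide_realpow_zero) auto
    have "incseq F'"
      by (auto simp: incseq_def F'_def)
    then show "(\<lambda>m. d (F' m)) \<longlonglongrightarrow> d (\<Union>m. F' m)"
      unfolding d_def by (intro fsm_incseq[OF nu]) auto
    have "\<gamma> - 2 / 2 ^ m + 0 \<le> d (F' m)" for m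
    proof (rule LIMSEQ_le)
      have *: "decseq (\<lambda>n. F m (n + m))"
        by (auto simp: decseq_def F_def)
      show "(\<lambda>n. d (F m n)) \<longlonglongrightarrow> d (F' m)"
        unfolding d_def F'_eq
        by (rule LIMSEQ_offset[where k=m]) (auto intro!: fsm_decseq[OF nu] *)
      show "(\<lambda>n. \<gamma> - 2 / 2 ^ m + 1 / 2 ^ n) \<longlonglongrightarrow> \<gamma> - 2 / 2 ^ m + 0"
        by (intro tendsto_add LIMSEQ_divide_realpow_zero tendsto_const) auto
      show "\<exists>N. \<forall>n\<ge>N. \<gamma> - 2 / 2 ^ m + 1 / 2 ^ n \<le> d (F m n)"
        using 1[of m] by (intro exI[of _ m]) auto
    qed
    then show "\<exists>N. \<forall>n\<ge>N. \<gamma> - 2 / 2 ^ n \<le> d (F' n)"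
      by auto
  qed
  have Ym: "(\<Union>m. F' m) \<in> sets borel" by auto
  show ?thesis
  proof (intro bexI[OF _ Ym] conjI ballI impI)
    fix X :: "'a set" assume Xm: "X \<in> sets borel" and X: "X \<subseteq> (\<Union>m. F' m)"
    have "d (\<Union>m. F' m) - d X = d ((\<Union>m. F' m) - X)"
      using X diff[OF Ym Xm] by (simp add: Int_absorb1 Int_commute inf.absorb_iff2)
    also have "\<dots> \<le> \<gamma>"
      using Ym Xm by auto
    finally show "0 \<le> \<nu> X"
      using \<gamma>_le by (auto simp: d_def)
  next
    fix X :: "'a set" assume Xm: "X \<in> sets borel" and X: "X \<inter> (\<Union>m. F' m) = {}"
    then have "d (\<Union>m. F' m) + d X = d ((\<Union>m. F' m) \<union> X)"
      using union[OF Ym Xm] by (simp add: Diff_triv Int_commute)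
    also have "\<dots> \<le> \<gamma>"
      using Ym Xm by auto
    finally show "\<nu> X \<le> 0"
      using \<gamma>_le by (auto simp: d_def)
  qed
qed



lemma pos_fsm_measure:
  fixes \<sigma> :: "'a::topological_space set \<Rightarrow> real"
  assumes s: "\<sigma> \<in> fsm" and pos: "\<And>X. X \<in> sets borel \<Longrightarrow> 0 \<le> \<sigma> X"
  defines "m \<equiv> measure_of (space borel) (sets borel) (\<lambda>A. ennreal (\<sigma> A))"
  shows "finite_measure m" "sets m = sets borel" "\<And>A. A \<in> sets borel \<Longrightarrow> measure m A = \<sigma> A"
proof -
  have sa: "sigma_algebra (space borel) (sets (borel::'a measure))"
    by (rule sets.sigma_algebra_axioms)
  have po: "positive (sets borel) (\<lambda>A. ennreal (\<sigma> A))"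
    unfolding positive_def using fsm_empty[OF s] by simp
  have ca: "countably_additive (sets borel) (\<lambda>A. ennreal (\<sigma> A))"
    unfolding countably_additive_def
  proof (intro allI impI)
    fix A :: "nat \<Rightarrow> 'a set" assume A: "range A \<subseteq> sets borel" "disjoint_family A" "\<Union> (range A) \<in> sets borel"
    have su: "(\<lambda>n. \<sigma> (A n)) sums \<sigma> (\<Union>n. A n)" by (rule fsm_sums[OF s A(1,2)])
    have "(\<Sum>i. ennreal (\<sigma> (A i))) = ennreal (\<Sum>i. \<sigma> (A i))"
      using su A(1) pos by (intro suminf_ennreal2) (auto simp: sums_iff)
    then show "(\<Sum>i. ennreal (\<sigma> (A i))) = ennreal (\<sigma> (\<Union> (range A)))"
      using su by (simp add: sums_iff)
  qed
  have em: "emeasure m A = ennreal (\<sigma> A)" if "A \<in> sets borel" for A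
    unfolding m_def by (rule emeasure_measure_of_sigma[OF sa po ca that])
  show sm: "sets m = sets borel"
    unfolding m_def by (metis sets_measure_of sets.space_closed sets.sigma_sets_eq)
  have sp: "space m = UNIV" using sets_eq_imp_space_eq[OF sm] by simp
  show "finite_measure m"
    by (rule finite_measureI) (simp add: sp em)
  show "measure m A = \<sigma> A" if "A \<in> sets borel" for A
    using em[OF that] pos[OF that] by (simp add: measure_def)
qed

lemma fsm_jordan:
  fixes \<nu> :: "'a::topological_space set \<Rightarrow> real"
  assumes nu: "\<nu> \<in> fsm"
  shows "\<exists>m1 m2. finite_measure m1 \<and> sets m1 = sets (borel::'a measure) \<and> finite_measure m2 \<and>
     sets m2 = sets (borel::'a measure) \<and> (\<forall>A\<in>sets (borel::'a measure). \<nu> A = measure m1 A - measure m2 A)"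
proof -
  obtain Y where Y: "Y \<in> sets borel" "\<And>X. X \<in> sets borel \<Longrightarrow> X \<subseteq> Y \<Longrightarrow> 0 \<le> \<nu> X"
    "\<And>X. X \<in> sets borel \<Longrightarrow> X \<inter> Y = {} \<Longrightarrow> \<nu> X \<le> 0"
    using fsm_hahn[OF nu] by blast
  define s1 where "s1 A = (if A \<in> sets borel then \<nu> (A \<inter> Y) else 0)" for A
  define s2 where "s2 A = (if A \<in> sets borel then - \<nu> (A - Y) else 0)" for A
  have s1f: "s1 \<in> fsm"
    unfolding fsm_def
  proof (safe)
    show "s1 {} = 0" using fsm_empty[OF nu] by (simp add: s1_def)
  next
    fix A :: "'a set" assume "A \<notin> sets borel" then show "s1 A = 0" by (simp add: s1_def)
  next
    fix F :: "nat \<Rightarrow> 'a set" assume F: "range F \<subseteq> sets borel" "disjoint_family F"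
    have "(\<lambda>n. \<nu> (F n \<inter> Y)) sums \<nu> (\<Union>n. F n \<inter> Y)"
      using F Y(1) by (intro fsm_sums[OF nu]) (auto simp: disjoint_family_on_def)
    moreover have "(\<Union>n. F n \<inter> Y) = (\<Union>n. F n) \<inter> Y" by auto
    moreover have "(\<Union>n. F n) \<in> sets borel" using F by auto
    ultimately show "(\<lambda>n. s1 (F n)) sums s1 (\<Union> (range F))" using F by (auto simp: s1_def)
  qed
  have s2f: "s2 \<in> fsm"
    unfolding fsm_def
  proof (safe)
    show "s2 {} = 0" using fsm_empty[OF nu] by (simp add: s2_def)
  next
    fix A :: "'a set" assume "A \<notin> sets borel" then show "s2 A = 0" by (simp add: s2_def)
  next
    fix F :: "nat \<Rightarrow> 'a set" assume F: "range F \<subseteq> sets borel" "disjoint_family F"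
    have "(\<lambda>n. \<nu> (F n - Y)) sums \<nu> (\<Union>n. F n - Y)"
      using F Y(1) by (intro fsm_sums[OF nu]) (auto simp: disjoint_family_on_def)
    then have "(\<lambda>n. - \<nu> (F n - Y)) sums (- \<nu> (\<Union>n. F n - Y))" by (rule sums_minus)
    moreover have "(\<Union>n. F n - Y) = (\<Union>n. F n) - Y" by auto
    moreover have "(\<Union>n. F n) \<in> sets borel" using F by auto
    ultimately show "(\<lambda>n. s2 (F n)) sums s2 (\<Union> (range F))" using F by (auto simp: s2_def)
  qed
  have p1: "0 \<le> s1 X" if "X \<in> sets borel" for X using Y that by (auto simp: s1_def)
  have p2: "0 \<le> s2 X" if "X \<in> sets borel" for X
    using Y(1) Y(3)[of "X - Y"] that by (auto simp: s2_def)
  note M1 = pos_fsm_measure[OF s1f p1] and M2 = pos_fsm_measure[OF s2f p2]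
  show ?thesis
  proof (intro exI conjI ballI)
    fix A :: "'a set" assume A: "A \<in> sets borel"
    have "\<nu> A = \<nu> (A \<inter> Y) + \<nu> (A - Y)"
      using fsm_diff[OF nu A Y(1)] by simp
    then show "\<nu> A = measure (measure_of (space borel) (sets borel) (\<lambda>A. ennreal (s1 A))) A -
        measure (measure_of (space borel) (sets borel) (\<lambda>A. ennreal (s2 A))) A"
      using M1(3)[of A] M2(3)[of A] A by (simp add: s1_def s2_def)
  qed (use M1 M2 in auto)
qed

lemma sint_rep:
  fixes \<nu> :: "'a::topological_space set \<Rightarrow> real"
  assumes nu: "\<nu> \<in> fsm"
  shows "\<exists>m1 m2. finite_measure m1 \<and> sets m1 = sets (borel::'a measure) \<and> finite_measure m2 \<and>
     sets m2 = sets (borel::'a measure) \<and> (\<forall>A\<in>sets (borel::'a measure). \<nu> A = measure m1 A - measure m2 A)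
     \<and> (\<forall>f. sint \<nu> f = integral\<^sup>L m1 f - integral\<^sup>L m2 f)"
proof -
  define P where "P = (\<lambda>(m1, m2). finite_measure m1 \<and> sets m1 = sets (borel::'a measure)
        \<and> finite_measure m2 \<and> sets m2 = sets (borel::'a measure)
        \<and> (\<forall>A\<in>sets (borel::'a measure). \<nu> A = measure m1 A - measure m2 A))"
  have ex: "\<exists>p. P p" using fsm_jordan[OF nu] unfolding P_def by auto
  define p where "p = Eps P"
  have Pp: "P p" unfolding p_def using ex by (rule someI_ex)
  obtain m1 m2 where pe: "p = (m1, m2)" by (cases p)
  have "sint \<nu> f = integral\<^sup>L m1 f - integral\<^sup>L m2 f" for f
    unfolding sint_def using pe unfolding p_def P_def by simp
  then show ?thesis using Pp pe unfolding P_def by auto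
qed

lemma sint_indicator:
  fixes \<nu> :: "'a::topological_space set \<Rightarrow> real"
  assumes nu: "\<nu> \<in> fsm" and A: "A \<in> sets borel"
  shows "sint \<nu> (indicator A) = \<nu> A"
proof -
  obtain m1 m2 where m: "finite_measure m1" "sets m1 = sets (borel::'a measure)" "finite_measure m2"
     "sets m2 = sets (borel::'a measure)" "\<forall>A\<in>sets (borel::'a measure). \<nu> A = measure m1 A - measure m2 A"
     "\<forall>f. sint \<nu> f = integral\<^sup>L m1 f - integral\<^sup>L m2 f"
    using sint_rep[OF nu] by blast
  have "space m1 = UNIV" "space m2 = UNIV"
    using sets_eq_imp_space_eq[OF m(2)] sets_eq_imp_space_eq[OF m(4)] by auto
  then show ?thesis using m A by simp
qed

lemma sint_one:
  fixes \<nu> :: "'a::topological_space set \<Rightarrow> real"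
  assumes nu: "\<nu> \<in> fsm"
  shows "sint \<nu> (\<lambda>_. 1) = \<nu> UNIV"
proof -
  have "(\<lambda>_. 1::real) = indicator (UNIV::'a set)" by (rule ext) simp
  then show ?thesis using sint_indicator[OF nu, of UNIV] by simp
qed

lemma sint_mult_const:
  fixes \<nu> :: "'a::topological_space set \<Rightarrow> real"
  assumes nu: "\<nu> \<in> fsm"
  shows "sint \<nu> (\<lambda>x. f x * c) = sint \<nu> f * c"
proof -
  obtain m1 m2 where m: "\<forall>f. sint \<nu> f = integral\<^sup>L m1 f - integral\<^sup>L m2 f"
    using sint_rep[OF nu] by blast
  show ?thesis using m by (simp add: left_diff_distrib)
qed



lemma disjoint_id: "disjoint P \<Longrightarrow> disjoint_family_on (\<lambda>A. A) P"
  unfolding disjoint_def disjoint_family_on_def by auto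

lemma tv_bdd:
  fixes \<nu> :: "'a::topological_space set \<Rightarrow> real"
  assumes nu: "\<nu> \<in> fsm"
  shows "bdd_above {(\<Sum>A\<in>P. \<bar>\<nu> A\<bar>) | P. finite P \<and> P \<subseteq> sets (borel::'a measure) \<and> disjoint P}"
proof -
  obtain m1 m2 where m: "finite_measure m1" "sets m1 = sets (borel::'a measure)" "finite_measure m2"
     "sets m2 = sets (borel::'a measure)" "\<forall>A\<in>sets (borel::'a measure). \<nu> A = measure m1 A - measure m2 A"
    using fsm_jordan[OF nu] by blast
  interpret M1: finite_measure m1 by fact
  interpret M2: finite_measure m2 by fact
  have sp: "space m1 = UNIV" "space m2 = UNIV"
    using sets_eq_imp_space_eq[OF m(2)] sets_eq_imp_space_eq[OF m(4)] by auto
  have "(\<Sum>A\<in>P. \<bar>\<nu> A\<bar>) \<le> measure m1 UNIV + measure m2 UNIV"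
    if P: "finite P" "P \<subseteq> sets borel" "disjoint P" for P
  proof -
    have "\<bar>\<nu> A\<bar> \<le> measure m1 A + measure m2 A" if "A \<in> P" for A
    proof -
      have "\<nu> A = measure m1 A - measure m2 A" using m(5) P(2) that by auto
      then show ?thesis using measure_nonneg[of m1 A] measure_nonneg[of m2 A] by linarith
    qed
    then have "(\<Sum>A\<in>P. \<bar>\<nu> A\<bar>) \<le> (\<Sum>A\<in>P. measure m1 A + measure m2 A)"
      by (intro sum_mono)
    also have "\<dots> = (\<Sum>A\<in>P. measure m1 A) + (\<Sum>A\<in>P. measure m2 A)"
      by (simp add: sum.distrib)
    also have "\<dots> = measure m1 (\<Union>A\<in>P. A) + measure m2 (\<Union>A\<in>P. A)"
      using M1.finite_measure_finite_Union[of P "\<lambda>A. A"] M2.finite_measure_finite_Union[of P "\<lambda>A. A"]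
        P m(2,4) disjoint_id[OF P(3)] by auto
    also have "\<dots> \<le> measure m1 UNIV + measure m2 UNIV"
      using M1.bounded_measure M2.bounded_measure sp by (intro add_mono) auto
    finally show ?thesis .
  qed
  then show ?thesis unfolding bdd_above_def by blast
qed

lemma tv_ge:
  fixes \<nu> :: "'a::topological_space set \<Rightarrow> real"
  assumes nu: "\<nu> \<in> fsm" and P: "finite P" "P \<subseteq> sets (borel::'a measure)" "disjoint P"
  shows "(\<Sum>A\<in>P. \<bar>\<nu> A\<bar>) \<le> tvnorm \<nu>"
  unfolding tvnorm_def by (rule cSup_upper[OF _ tv_bdd[OF nu]]) (use P in blast)

lemma tv_single:
  fixes \<nu> :: "'a::topological_space set \<Rightarrow> real"
  assumes nu: "\<nu> \<in> fsm" and A: "A \<in> sets (borel::'a measure)"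
  shows "\<bar>\<nu> A\<bar> \<le> tvnorm \<nu>"
  using tv_ge[OF nu, of "{A}"] A by (simp add: disjoint_def)

lemma tv_scale_prob:
  fixes \<mu> :: "'a::topological_space measure"
  assumes "prob_space \<mu>" "sets \<mu> = sets (borel::'a measure)"
  shows "tvnorm (\<lambda>A. c * as_fsm \<mu> A) \<le> \<bar>c\<bar>"
  unfolding tvnorm_def
proof (rule cSup_least)
  show "{(\<Sum>A\<in>P. \<bar>c * as_fsm \<mu> A\<bar>) | P. finite P \<and> P \<subseteq> sets (borel::'a measure) \<and> disjoint P} \<noteq> {}"
    by (auto intro!: exI[of _ "{}"] simp: disjoint_def)
next
  interpret prob_space \<mu> by fact
  fix x assume "x \<in> {(\<Sum>A\<in>P. \<bar>c * as_fsm \<mu> A\<bar>) | P. finite P \<and> P \<subseteq> sets (borel::'a measure) \<and> disjoint P}"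
  then obtain P where P: "finite P" "P \<subseteq> sets borel" "disjoint P" and x: "x = (\<Sum>A\<in>P. \<bar>c * as_fsm \<mu> A\<bar>)"
    by blast
  have "x = \<bar>c\<bar> * (\<Sum>A\<in>P. measure \<mu> A)"
    unfolding x using P(2) by (auto simp: as_fsm_def abs_mult sum_distrib_left subset_eq intro!: sum.cong)
  also have "\<dots> = \<bar>c\<bar> * measure \<mu> (\<Union>A\<in>P. A)"
    using finite_measure_finite_Union[of P "\<lambda>A. A"] P assms(2) disjoint_id[OF P(3)] by auto
  also have "\<dots> \<le> \<bar>c\<bar> * 1" by (intro mult_left_mono) auto
  finally show "x \<le> \<bar>c\<bar>" by simp
qed

lemma delta_int:
  fixes g :: "'a::topological_space \<Rightarrow> real"
  assumes m: "finite_measure m1" "sets m1 = sets (borel::'a measure)" "finite_measure m2"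
     "sets m2 = sets (borel::'a measure)"
    and d: "\<And>A. A \<in> sets (borel::'a measure) \<Longrightarrow> measure m1 A - measure m2 A = indicator A y"
    and g: "g \<in> borel_measurable borel" and B: "\<And>x. \<bar>g x\<bar> \<le> B"
  shows "integral\<^sup>L m1 g - integral\<^sup>L m2 g = g y"
proof -
  interpret M1: finite_measure m1 by fact
  interpret M2: finite_measure m2 by fact
  have em: "emeasure m1 A = emeasure m2 A + indicator A y" if A: "A \<in> sets borel" for A
  proof -
    have "measure m1 A = measure m2 A + indicator A y" using d[OF A] by simp
    then show ?thesis using A m(2,4)
      by (simp add: M1.emeasure_eq_measure M2.emeasure_eq_measure ennreal_plus split: split_indicator)
  qed
  have meq1: "borel_measurable m1 = borel_measurable borel" by (rule measurable_cong_sets) (use m in auto)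
  have meq2: "borel_measurable m2 = borel_measurable borel" by (rule measurable_cong_sets) (use m in auto)
  have um1: "f \<in> borel_measurable m1" if "f \<in> borel_measurable borel" for f :: "'a \<Rightarrow> ennreal"
    using that meq1 by blast
  have um2: "f \<in> borel_measurable m2" if "f \<in> borel_measurable borel" for f :: "'a \<Rightarrow> ennreal"
    using that meq2 by blast
  have nn: "(\<integral>\<^sup>+x. f x \<partial>m1) = (\<integral>\<^sup>+x. f x \<partial>m2) + f y" if f: "f \<in> borel_measurable borel" for f :: "'a \<Rightarrow> ennreal"
    using f
  proof (induction rule: borel_measurable_induct)
    case (cong f g)
    then have "f = g" by (auto simp: space_borel)
    then show ?case using cong by simp
  next
    case (set A)
    then show ?case using em[OF set] m(2,4) by simp
  next
    case (mult u c)
    have "(\<integral>\<^sup>+x. c * u x \<partial>m1) = c * (\<integral>\<^sup>+x. u x \<partial>m1)" by (rule nn_integral_cmult[OF um1[OF \<open>u \<in> borel_measurable borel\<close>]])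
    moreover have "(\<integral>\<^sup>+x. c * u x \<partial>m2) = c * (\<integral>\<^sup>+x. u x \<partial>m2)" by (rule nn_integral_cmult[OF um2[OF \<open>u \<in> borel_measurable borel\<close>]])
    ultimately show ?case using mult.IH by (simp add: distrib_left)
  next
    case (add u v)
    have "(\<integral>\<^sup>+x. v x + u x \<partial>m1) = (\<integral>\<^sup>+x. v x \<partial>m1) + (\<integral>\<^sup>+x. u x \<partial>m1)"
      by (rule nn_integral_add[OF um1[OF \<open>v \<in> borel_measurable borel\<close>] um1[OF \<open>u \<in> borel_measurable borel\<close>]])
    moreover have "(\<integral>\<^sup>+x. v x + u x \<partial>m2) = (\<integral>\<^sup>+x. v x \<partial>m2) + (\<integral>\<^sup>+x. u x \<partial>m2)"
      by (rule nn_integral_add[OF um2[OF \<open>v \<in> borel_measurable borel\<close>] um2[OF \<open>u \<in> borel_measurable borel\<close>]])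
    ultimately show ?case using add.IH by (simp add: add_ac)
  next
    case (seq U)
    have i1: "(\<integral>\<^sup>+x. (SUP i. U i x) \<partial>m1) = (SUP i. (\<integral>\<^sup>+x. U i x \<partial>m1))"
      using seq meq1 by (intro nn_integral_monotone_convergence_SUP) auto
    have i2: "(\<integral>\<^sup>+x. (SUP i. U i x) \<partial>m2) = (SUP i. (\<integral>\<^sup>+x. U i x \<partial>m2))"
      using seq meq2 by (intro nn_integral_monotone_convergence_SUP) auto
    have inc2: "incseq (\<lambda>i. (\<integral>\<^sup>+x. U i x \<partial>m2))"
      using \<open>incseq U\<close> by (auto simp: incseq_def le_fun_def intro!: nn_integral_mono)
    have inc3: "incseq (\<lambda>i. U i y)"
      using \<open>incseq U\<close> by (auto simp: incseq_def le_fun_def)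
    have "(SUP i. (\<integral>\<^sup>+x. U i x \<partial>m1)) = (SUP i. (\<integral>\<^sup>+x. U i x \<partial>m2) + U i y)"
      using seq.IH by simp
    also have "\<dots> = (SUP i. (\<integral>\<^sup>+x. U i x \<partial>m2)) + (SUP i. U i y)"
      by (rule ennreal_SUP_add[OF inc2 inc3])
    moreover have "(\<lambda>x. (SUP i. U i) x) = (\<lambda>x. SUP i. U i x)" by (simp add: SUP_apply image_image)
    ultimately show ?case using i1 i2 by (simp add: image_image SUP_apply)
  qed
  have real: "integral\<^sup>L m1 h = integral\<^sup>L m2 h + h y"
    if h: "h \<in> borel_measurable borel" "\<And>x. 0 \<le> h x" "\<And>x. h x \<le> Bd" for h :: "'a \<Rightarrow> real" and Bd
  proof -
    have int1: "integrable m1 h"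
      using h meq1 by (intro M1.integrable_const_bound[where B=Bd]) auto
    have int2: "integrable m2 h"
      using h meq2 by (intro M2.integrable_const_bound[where B=Bd]) auto
    have "ennreal (integral\<^sup>L m1 h) = ennreal (integral\<^sup>L m2 h) + ennreal (h y)"
      using nn[of "\<lambda>x. ennreal (h x)"] h nn_integral_eq_integral[OF int1] nn_integral_eq_integral[OF int2]
      by simp
    also have "\<dots> = ennreal (integral\<^sup>L m2 h + h y)"
      using h by (intro ennreal_plus[symmetric] integral_nonneg_AE) auto
    finally show ?thesis
      using h by (subst (asm) ennreal_inj) (auto intro!: integral_nonneg_AE add_nonneg_nonneg)
  qed
  define h1 where "h1 x = max (g x) 0" for x
  define h2 where "h2 x = max (- g x) 0" for x
  have gh: "g = (\<lambda>x. h1 x - h2 x)" by (auto simp: h1_def h2_def max_def)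
  have h1m: "h1 \<in> borel_measurable borel" and h2m: "h2 \<in> borel_measurable borel"
    unfolding h1_def h2_def using g by auto
  have b1: "h1 x \<le> \<bar>B\<bar>" "h2 x \<le> \<bar>B\<bar>" for x using B[of x] by (auto simp: h1_def h2_def)
  have r1: "integral\<^sup>L m1 h1 = integral\<^sup>L m2 h1 + h1 y" by (rule real[OF h1m _ b1(1)]) (auto simp: h1_def)
  have r2: "integral\<^sup>L m1 h2 = integral\<^sup>L m2 h2 + h2 y" by (rule real[OF h2m _ b1(2)]) (auto simp: h2_def)
  have i11: "integrable m1 h1" "integrable m1 h2" "integrable m2 h1" "integrable m2 h2"
    using h1m h2m meq1 meq2 b1 
    by (auto intro!: M1.integrable_const_bound[where B="\<bar>B\<bar>"] M2.integrable_const_bound[where B="\<bar>B\<bar>"]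
         simp: h1_def h2_def)
  show ?thesis
    unfolding gh using r1 r2 i11 by (simp add: integral_diff)
qed



lemma prob_fin: "prob_space \<mu> \<Longrightarrow> finite_measure \<mu>"
  by (rule prob_space.axioms(1))

lemma single_borel: "{x} \<in> sets (borel::'a::t1_space measure)"
  by (rule borel_closed[OF closed_singleton])

lemma bounded_op_scal:
  fixes \<mu> :: "'a::topological_space measure" and c :: "('a set \<Rightarrow> real) \<Rightarrow> real"
  assumes mu: "prob_space \<mu>" "sets \<mu> = sets (borel::'a measure)"
    and lin: "\<And>\<nu> \<rho> a b. \<nu> \<in> fsm \<Longrightarrow> \<rho> \<in> fsm \<Longrightarrow> c (\<lambda>A. a * \<nu> A + b * \<rho> A) = a * c \<nu> + b * c \<rho>"
    and bd: "\<And>\<nu>. \<nu> \<in> fsm \<Longrightarrow> \<bar>c \<nu>\<bar> \<le> tvnorm \<nu>"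
  shows "bounded_op (\<lambda>\<nu> A. c \<nu> * as_fsm \<mu> A)"
  unfolding bounded_op_def
proof (intro conjI ballI allI exI[of _ 1])
  fix \<nu> :: "'a set \<Rightarrow> real" assume "\<nu> \<in> fsm"
  show "(\<lambda>A. c \<nu> * as_fsm \<mu> A) \<in> fsm"
    by (rule fsm_scale[OF as_fsm_fsm[OF prob_fin[OF mu(1)] mu(2)]])
  show "tvnorm (\<lambda>A. c \<nu> * as_fsm \<mu> A) \<le> 1 * tvnorm \<nu>"
    using tv_scale_prob[OF mu, of "c \<nu>"] bd[OF \<open>\<nu> \<in> fsm\<close>] by simp
next
  fix \<nu> \<rho> :: "'a set \<Rightarrow> real" and a b :: real assume "\<nu> \<in> fsm" "\<rho> \<in> fsm"
  then show "(\<lambda>A. c (\<lambda>A. a * \<nu> A + b * \<rho> A) * as_fsm \<mu> A) =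
       (\<lambda>A. a * (c \<nu> * as_fsm \<mu> A) + b * (c \<rho> * as_fsm \<mu> A))"
    using lin by (auto simp: algebra_simps)
qed

lemma weakly_cont_tensor:
  fixes \<mu> :: "'a::t1_space measure" and f :: "'a \<Rightarrow> real"
  assumes mu: "prob_space \<mu>" "sets \<mu> = sets (borel::'a measure)"
    and f: "f \<in> borel_measurable borel" "\<And>x. \<bar>f x\<bar> \<le> 1"
    and bo: "bounded_op (tensor f (as_fsm \<mu>))"
  shows "weakly_cont (tensor f (as_fsm \<mu>))"
  unfolding weakly_cont_def
proof (intro conjI bo exI[of _ "\<lambda>y A. f y * as_fsm \<mu> A"])
  have mf: "as_fsm \<mu> \<in> fsm" by (rule as_fsm_fsm[OF prob_fin[OF mu(1)] mu(2)])
  show "bounded_kernel (\<lambda>y A. f y * as_fsm \<mu> A)"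
    unfolding bounded_kernel_def
  proof (intro conjI allI ballI exI[of _ 1])
    fix x show "(\<lambda>A. f x * as_fsm \<mu> A) \<in> fsm" by (rule fsm_scale[OF mf])
    show "tvnorm (\<lambda>A. f x * as_fsm \<mu> A) \<le> 1"
      using tv_scale_prob[OF mu, of "f x"] f(2)[of x] by simp
  next
    fix A :: "'a set" assume "A \<in> sets borel"
    show "(\<lambda>x. f x * as_fsm \<mu> A) \<in> borel_measurable borel" using f(1) by simp
  qed
  show "\<forall>\<nu>\<in>fsm. \<forall>A\<in>sets borel. tensor f (as_fsm \<mu>) \<nu> A = sint \<nu> (\<lambda>x. f x * as_fsm \<mu> A)"
    by (auto simp: tensor_def sint_mult_const)
qed

lemma bounded_op_T:
  fixes \<mu> :: "'a::t1_space measure"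
  assumes mu: "prob_space \<mu>" "sets \<mu> = sets (borel::'a measure)"
  shows "bounded_op (tensor (indicator {x}) (as_fsm \<mu>))"
proof -
  have "bounded_op (\<lambda>\<nu> A. sint \<nu> (indicator {x}) * as_fsm \<mu> A)"
  proof (rule bounded_op_scal[OF mu])
    fix \<nu> \<rho> :: "'a set \<Rightarrow> real" and a b :: real assume "\<nu> \<in> fsm" "\<rho> \<in> fsm"
    then show "sint (\<lambda>A. a * \<nu> A + b * \<rho> A) (indicator {x}) = a * sint \<nu> (indicator {x}) + b * sint \<rho> (indicator {x})"
      using sint_indicator[OF fsm_lin[OF \<open>\<nu> \<in> fsm\<close> \<open>\<rho> \<in> fsm\<close>, of a b] single_borel]
        sint_indicator[OF \<open>\<nu> \<in> fsm\<close> single_borel] sint_indicator[OF \<open>\<rho> \<in> fsm\<close> single_borel] by simp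
  next
    fix \<nu> :: "'a set \<Rightarrow> real" assume "\<nu> \<in> fsm"
    then show "\<bar>sint \<nu> (indicator {x})\<bar> \<le> tvnorm \<nu>"
      using single_borel by (simp add: sint_indicator tv_single)
  qed
  then show ?thesis by (simp add: tensor_def)
qed

lemma bounded_op_T1:
  fixes \<mu> :: "'a::t1_space measure"
  assumes mu: "prob_space \<mu>" "sets \<mu> = sets (borel::'a measure)"
  shows "bounded_op (tensor (\<lambda>_. 1) (as_fsm \<mu>))"
proof -
  have "bounded_op (\<lambda>\<nu> A. sint \<nu> (\<lambda>_. 1) * as_fsm \<mu> A)"
  proof (rule bounded_op_scal[OF mu])
    fix \<nu> \<rho> :: "'a set \<Rightarrow> real" and a b :: real assume "\<nu> \<in> fsm" "\<rho> \<in> fsm"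
    then show "sint (\<lambda>A. a * \<nu> A + b * \<rho> A) (\<lambda>_. 1) = a * sint \<nu> (\<lambda>_. 1) + b * sint \<rho> (\<lambda>_. 1)"
      using sint_one[OF fsm_lin[OF \<open>\<nu> \<in> fsm\<close> \<open>\<rho> \<in> fsm\<close>, of a b]]
        sint_one[OF \<open>\<nu> \<in> fsm\<close>] sint_one[OF \<open>\<rho> \<in> fsm\<close>] by simp
  next
    fix \<nu> :: "'a set \<Rightarrow> real" assume "\<nu> \<in> fsm"
    then show "\<bar>sint \<nu> (\<lambda>_. 1)\<bar> \<le> tvnorm \<nu>"
      by (simp add: sint_one tv_single)
  qed
  then show ?thesis by (simp add: tensor_def)
qed

lemma atoms_abs_summable:
  fixes \<nu> :: "'a::t1_space set \<Rightarrow> real"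
  assumes nu: "\<nu> \<in> fsm"
  shows "(\<lambda>x. norm (\<nu> {x})) summable_on E" "infsum (\<lambda>x. norm (\<nu> {x})) E \<le> tvnorm \<nu>"
proof -
  have fin: "(\<Sum>x\<in>F. norm (\<nu> {x})) \<le> tvnorm \<nu>" if "finite F" for F
  proof -
    have "(\<Sum>x\<in>F. norm (\<nu> {x})) = (\<Sum>A\<in>(\<lambda>x. {x}) ` F. \<bar>\<nu> A\<bar>)"
      by (subst sum.reindex) (auto simp: inj_on_def)
    also have "\<dots> \<le> tvnorm \<nu>"
      by (rule tv_ge[OF nu]) (use that single_borel in \<open>auto simp: disjoint_def\<close>)
    finally show ?thesis .
  qed
  show as: "(\<lambda>x. norm (\<nu> {x})) summable_on E"
    by (rule nonneg_bdd_above_summable_on) (use fin in \<open>auto simp: bdd_above_def\<close>)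
  show "infsum (\<lambda>x. norm (\<nu> {x})) E \<le> tvnorm \<nu>"
    by (rule infsum_le_finite_sums[OF as fin])
qed

lemma atoms_summable:
  fixes \<nu> :: "'a::t1_space set \<Rightarrow> real"
  assumes nu: "\<nu> \<in> fsm"
  shows "(\<lambda>x. \<nu> {x}) summable_on E"
  by (rule abs_summable_summable[OF atoms_abs_summable(1)[OF nu]])

lemma atoms_bound:
  fixes \<nu> :: "'a::t1_space set \<Rightarrow> real"
  assumes nu: "\<nu> \<in> fsm"
  shows "\<bar>infsum (\<lambda>x. \<nu> {x}) E\<bar> \<le> tvnorm \<nu>"
  using norm_infsum_bound[OF atoms_abs_summable(1)[OF nu, of E]] atoms_abs_summable(2)[OF nu, of E]
  by simp

lemma atoms_lin:
  fixes \<nu> :: "'a::t1_space set \<Rightarrow> real"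
  assumes nu: "\<nu> \<in> fsm" and rho: "\<rho> \<in> fsm"
  shows "infsum (\<lambda>x. a * \<nu> {x} + b * \<rho> {x}) E = a * infsum (\<lambda>x. \<nu> {x}) E + b * infsum (\<lambda>x. \<rho> {x}) E"
proof -
  have s1: "(\<lambda>x. a * \<nu> {x}) summable_on E" using atoms_summable[OF nu] by (rule summable_on_cmult_right)
  have s2: "(\<lambda>x. b * \<rho> {x}) summable_on E" using atoms_summable[OF rho] by (rule summable_on_cmult_right)
  show ?thesis
    using infsum_add[OF s1 s2] infsum_cmult_right[OF atoms_summable[OF nu], of a]
      infsum_cmult_right[OF atoms_summable[OF rho], of b] by simp
qed

lemma bounded_op_S0:
  fixes \<mu> :: "'a::t1_space measure"
  assumes mu: "prob_space \<mu>" "sets \<mu> = sets (borel::'a measure)"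
  shows "bounded_op (\<lambda>\<nu> A. infsum (\<lambda>x. \<nu> {x}) E * as_fsm \<mu> A)"
  by (rule bounded_op_scal[OF mu]) (simp_all add: atoms_lin atoms_bound)



lemma tensor_ind_eval:
  fixes \<mu> :: "'a::t1_space measure"
  assumes "\<nu> \<in> fsm"
  shows "tensor (indicator {x}) (as_fsm \<mu>) \<nu> A = \<nu> {x} * as_fsm \<mu> A"
  using sint_indicator[OF assms single_borel] by (simp add: tensor_def)

lemma tensor_one_eval:
  fixes \<mu> :: "'a::t1_space measure"
  assumes "\<nu> \<in> fsm"
  shows "tensor (\<lambda>_. 1) (as_fsm \<mu>) \<nu> A = \<nu> UNIV * as_fsm \<mu> A"
  using sint_one[OF assms] by (simp add: tensor_def)

lemma as_fsm_nonneg: "0 \<le> as_fsm \<mu> A"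
  by (simp add: as_fsm_def)

definition dlt :: "'a::topological_space \<Rightarrow> 'a set \<Rightarrow> real" where
  "dlt y = as_fsm (return borel y)"

lemma dlt_fsm: "dlt y \<in> fsm"
  unfolding dlt_def
  by (rule as_fsm_fsm) (use prob_fin[OF prob_space_return[of y borel]] in auto)

lemma dlt_eval: "A \<in> sets borel \<Longrightarrow> dlt y A = indicator A y"
  by (simp add: dlt_def as_fsm_def measure_return)

lemma dlt_single: "dlt (y::'a::t1_space) {x} = (if x = y then 1 else 0 :: real)"
  using dlt_eval[OF single_borel, of y x] by (auto simp: indicator_def)

lemma dlt_pos: "0 \<le> dlt y A"
  by (simp add: dlt_def as_fsm_nonneg)

lemma remove_fsm:
  fixes \<nu> :: "'a::t1_space set \<Rightarrow> real"
  assumes nu: "\<nu> \<in> fsm"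
  shows "(\<lambda>B. if B \<in> sets borel then \<nu> (B - {x}) else 0) \<in> fsm"
  unfolding fsm_def
proof (safe)
  show "(if {} \<in> sets borel then \<nu> ({} - {x}) else 0) = 0" using fsm_empty[OF nu] by simp
next
  fix F :: "nat \<Rightarrow> 'a set" assume F: "range F \<subseteq> sets borel" "disjoint_family F"
  have "(\<lambda>n. \<nu> (F n - {x})) sums \<nu> (\<Union>n. F n - {x})"
    using F single_borel by (intro fsm_sums[OF nu]) (auto simp: disjoint_family_on_def)
  moreover have "(\<Union>n. F n - {x}) = (\<Union>n. F n) - {x}" by auto
  moreover have "(\<Union>n. F n) \<in> sets borel" using F by auto
  ultimately show "(\<lambda>n. if F n \<in> sets borel then \<nu> (F n - {x}) else 0) sums
     (if \<Union> (range F) \<in> sets borel then \<nu> (\<Union> (range F) - {x}) else 0)" using F by auto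
qed auto

lemma least_aux:
  fixes \<mu> :: "'a::t1_space measure" and E :: "'a set"
  assumes mu: "prob_space \<mu>" "sets \<mu> = sets (borel::'a measure)"
    and U: "bounded_op U" "\<forall>x\<in>E. op_le (tensor (indicator {x}) (as_fsm \<mu>)) U"
    and x0: "x0 \<in> E"
  shows "finite F \<Longrightarrow> F \<subseteq> E \<Longrightarrow> \<nu> \<in> fsm \<Longrightarrow> (\<forall>B. 0 \<le> \<nu> B) \<Longrightarrow>
     (\<Sum>x\<in>F. \<nu> {x}) * as_fsm \<mu> A \<le> U \<nu> A"
proof (induction F arbitrary: \<nu> rule: finite_induct)
  case empty
  have "tensor (indicator {x0}) (as_fsm \<mu>) \<nu> A \<le> U \<nu> A"
    using U(2) x0 empty unfolding op_le_def by blast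
  moreover have "0 \<le> tensor (indicator {x0}) (as_fsm \<mu>) \<nu> A"
    using tensor_ind_eval[OF empty(2)] empty(3)[rule_format, of "{x0}"] as_fsm_nonneg[of \<mu> A] by simp
  ultimately show ?case by simp
next
  case (insert x F)
  define \<rho> where "\<rho> B = (if B \<in> sets borel then \<nu> (B - {x}) else 0)" for B
  have rf: "\<rho> \<in> fsm" unfolding \<rho>_def by (rule remove_fsm[OF insert(5)])
  have rp: "\<forall>B. 0 \<le> \<rho> B" using insert(6) by (simp add: \<rho>_def)
  have dec: "\<nu> = (\<lambda>B. \<nu> {x} * dlt x B + 1 * \<rho> B)"
  proof
    fix B :: "'a set"
    show "\<nu> B = \<nu> {x} * dlt x B + 1 * \<rho> B"
    proof (cases "B \<in> sets borel")
      case True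
      have "\<nu> (B - {x}) = \<nu> B - \<nu> (B \<inter> {x})" by (rule fsm_diff[OF insert(5) True single_borel])
      then show ?thesis using True fsm_empty[OF insert(5)]
        by (auto simp: \<rho>_def dlt_eval indicator_def Int_absorb1 Int_commute)
    next
      case False
      then show ?thesis using fsm_nonborel[OF insert(5) False]
        by (simp add: \<rho>_def dlt_def as_fsm_def)
    qed
  qed
  have Ulin: "U \<nu> = (\<lambda>B. \<nu> {x} * U (dlt x) B + 1 * U \<rho> B)"
    using U(1) dlt_fsm rf unfolding bounded_op_def by (subst dec) blast
  have "tensor (indicator {x}) (as_fsm \<mu>) (dlt x) A \<le> U (dlt x) A"
    using U(2) insert(4) dlt_fsm dlt_pos unfolding op_le_def by blast
  moreover have "tensor (indicator {x}) (as_fsm \<mu>) (dlt x) A = as_fsm \<mu> A"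
    by (simp add: tensor_ind_eval[OF dlt_fsm] dlt_single)
  ultimately have d1: "as_fsm \<mu> A \<le> U (dlt x) A" by simp
  have ih: "(\<Sum>z\<in>F. \<rho> {z}) * as_fsm \<mu> A \<le> U \<rho> A"
    using insert rf rp by auto
  have zz: "{z} - {x} = {z}" if "z \<in> F" for z using insert(2) that by auto
  have "(\<Sum>z\<in>F. \<rho> {z}) = (\<Sum>z\<in>F. \<nu> {z})"
    using single_borel zz by (intro sum.cong) (auto simp: \<rho>_def)
  with ih have ih': "(\<Sum>z\<in>F. \<nu> {z}) * as_fsm \<mu> A \<le> U \<rho> A" by simp
  have "\<nu> {x} * as_fsm \<mu> A \<le> \<nu> {x} * U (dlt x) A"
    using d1 insert(6) by (intro mult_left_mono) auto
  then have "(\<Sum>z\<in>insert x F. \<nu> {z}) * as_fsm \<mu> A \<le> \<nu> {x} * U (dlt x) A + 1 * U \<rho> A"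
    using ih' insert(1,2) by (simp add: distrib_right)
  also have "\<dots> = U \<nu> A" by (subst Ulin) simp
  finally show ?case .
qed

theorem main_aux:
  fixes E :: "'a::polish_space set" and \<mu> :: "'a measure"
  assumes "E \<notin> sets (borel::'a measure)"
    and "prob_space \<mu>" and "sets \<mu> = sets (borel::'a measure)"
  shows "(\<forall>x\<in>E. weakly_cont (tensor (indicator {x}) (as_fsm \<mu>)))
    \<and> weakly_cont (tensor (\<lambda>_. 1) (as_fsm \<mu>))
    \<and> (\<forall>x\<in>E. op_le (tensor (indicator {x}) (as_fsm \<mu>)) (tensor (\<lambda>_. 1) (as_fsm \<mu>)))
    \<and> (\<exists>S. is_op_sup ((\<lambda>x. tensor (indicator {x}) (as_fsm \<mu>)) ` E) S)
    \<and> (\<forall>S. is_op_sup ((\<lambda>x. tensor (indicator {x}) (as_fsm \<mu>)) ` E) S \<longrightarrow> \<not> weakly_cont S)"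
proof -
  note mu = assms(2,3)
  have mf: "as_fsm \<mu> \<in> fsm" by (rule as_fsm_fsm[OF prob_fin[OF mu(1)] mu(2)])
  have mU: "as_fsm \<mu> UNIV = 1"
    using prob_space.prob_space[OF mu(1)] sets_eq_imp_space_eq[OF mu(2)] by (simp add: as_fsm_def)
  obtain x0 where x0: "x0 \<in> E" using assms(1) by (cases "E = {}") auto
  define S0 where "S0 = (\<lambda>\<nu> A. infsum (\<lambda>x. \<nu> {x}) E * as_fsm \<mu> A)"
  define Fam where "Fam = (\<lambda>x. tensor (indicator {x}) (as_fsm \<mu>)) ` E"
  have P1: "\<forall>x\<in>E. weakly_cont (tensor (indicator {x}) (as_fsm \<mu>))"
    using weakly_cont_tensor[OF mu _ _ bounded_op_T[OF mu]] single_borel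
    by (auto simp: indicator_def)
  have P2: "weakly_cont (tensor (\<lambda>_. 1) (as_fsm \<mu>))"
    using weakly_cont_tensor[OF mu _ _ bounded_op_T1[OF mu]] by auto
  have P3: "\<forall>x\<in>E. op_le (tensor (indicator {x}) (as_fsm \<mu>)) (tensor (\<lambda>_. 1) (as_fsm \<mu>))"
  proof (unfold op_le_def, intro ballI impI allI)
    fix x :: 'a and \<nu> :: "'a set \<Rightarrow> real" and A :: "'a set" assume nu: "\<nu> \<in> fsm" and pos: "\<forall>A. 0 \<le> \<nu> A"
    have "\<nu> (UNIV - {x}) = \<nu> UNIV - \<nu> (UNIV \<inter> {x})" using fsm_diff[of \<nu> UNIV "{x}"] nu single_borel[of x] by simp
    then have "\<nu> {x} \<le> \<nu> UNIV" using pos by (metis diff_ge_0_iff_ge inf_top_left)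
    then have "\<nu> {x} * as_fsm \<mu> A \<le> \<nu> UNIV * as_fsm \<mu> A"
      by (rule mult_right_mono[OF _ as_fsm_nonneg])
    then show "tensor (indicator {x}) (as_fsm \<mu>) \<nu> A \<le> tensor (\<lambda>_. 1) (as_fsm \<mu>) \<nu> A"
      using tensor_ind_eval[OF nu] tensor_one_eval[OF nu] by simp
  qed
  have S0b: "bounded_op S0" unfolding S0_def by (rule bounded_op_S0[OF mu])
  have S0up: "\<forall>T\<in>Fam. op_le T S0"
  proof (unfold Fam_def op_le_def, intro ballI impI allI, elim imageE)
    fix T and x :: 'a and \<nu> :: "'a set \<Rightarrow> real" and A :: "'a set" assume T: "T = tensor (indicator {x}) (as_fsm \<mu>)" and x: "x \<in> E"
      and nu: "\<nu> \<in> fsm" and pos: "\<forall>A. 0 \<le> \<nu> A"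
    have "infsum (\<lambda>z. \<nu> {z}) {x} \<le> infsum (\<lambda>z. \<nu> {z}) E"
      using x pos by (intro infsum_mono_neutral atoms_summable[OF nu]) auto
    then have "\<nu> {x} \<le> infsum (\<lambda>z. \<nu> {z}) E" by simp
    then have "\<nu> {x} * as_fsm \<mu> A \<le> infsum (\<lambda>z. \<nu> {z}) E * as_fsm \<mu> A"
      by (rule mult_right_mono[OF _ as_fsm_nonneg])
    then show "T \<nu> A \<le> S0 \<nu> A"
      unfolding T S0_def using tensor_ind_eval[OF nu] by simp
  qed
  have S0least: "op_le S0 U" if U: "bounded_op U" "\<forall>T\<in>Fam. op_le T U" for U
  proof (unfold op_le_def, intro ballI impI allI)
    fix \<nu> :: "'a set \<Rightarrow> real" and A :: "'a set" assume nu: "\<nu> \<in> fsm" and pos: "\<forall>A. 0 \<le> \<nu> A"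
    have U2: "\<forall>x\<in>E. op_le (tensor (indicator {x}) (as_fsm \<mu>)) U" using U(2) by (auto simp: Fam_def)
    note aux = least_aux[OF mu U(1) U2 x0 _ _ nu pos]
    have Unu: "U \<nu> \<in> fsm" using U(1) nu unfolding bounded_op_def by blast
    show "S0 \<nu> A \<le> U \<nu> A"
    proof (cases "A \<in> sets borel")
      case False
      then show ?thesis using fsm_nonborel[OF Unu False] by (simp add: S0_def as_fsm_def)
    next
      case True
      have U0: "0 \<le> U \<nu> A" using aux[of "{}" A] by simp
      show ?thesis
      proof (cases "as_fsm \<mu> A = 0")
        case True then show ?thesis using U0 by (simp add: S0_def)
      next
        case False
        then have mp: "0 < as_fsm \<mu> A" using as_fsm_nonneg[of \<mu> A] by simp
        have "infsum (\<lambda>x. \<nu> {x}) E \<le> U \<nu> A / as_fsm \<mu> A"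
        proof (rule infsum_le_finite_sums[OF atoms_summable[OF nu]])
          fix F assume "finite F" "F \<subseteq> E"
          then show "(\<Sum>x\<in>F. \<nu> {x}) \<le> U \<nu> A / as_fsm \<mu> A"
            using aux[of F A] mp by (simp add: pos_le_divide_eq)
        qed
        then show ?thesis using mp by (simp add: S0_def pos_le_divide_eq)
      qed
    qed
  qed
  have P4: "is_op_sup Fam S0"
    unfolding is_op_sup_def using S0b S0up S0least by blast
  have P5: "\<not> weakly_cont S" if S: "is_op_sup Fam S" for S
  proof
    assume wc: "weakly_cont S"
    then obtain k where k: "bounded_kernel k"
      and kS: "\<And>\<nu> A. \<nu> \<in> fsm \<Longrightarrow> A \<in> sets borel \<Longrightarrow> S \<nu> A = sint \<nu> (\<lambda>x. k x A)"
      unfolding weakly_cont_def by blast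
    have SleS0: "op_le S S0" using S S0b S0up unfolding is_op_sup_def by blast
    have TleS: "op_le (tensor (indicator {x}) (as_fsm \<mu>)) S" if "x \<in> E" for x
      using S that unfolding is_op_sup_def Fam_def by blast
    obtain C where C: "\<And>x. tvnorm (k x) \<le> C" using k unfolding bounded_kernel_def by blast
    have kf: "k x \<in> fsm" for x using k unfolding bounded_kernel_def by blast
    have gm: "(\<lambda>x. k x UNIV) \<in> borel_measurable borel" using k unfolding bounded_kernel_def by simp
    have gb: "\<bar>k x UNIV\<bar> \<le> C" for x using tv_single[OF kf, of UNIV x] C[of x] by simp
    have eq: "k y UNIV = indicator E y" for y
    proof -
      obtain m1 m2 where m: "finite_measure m1" "sets m1 = sets (borel::'a measure)" "finite_measure m2"
        "sets m2 = sets (borel::'a measure)" "\<forall>A\<in>sets (borel::'a measure). dlt y A = measure m1 A - measure m2 A"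
        "\<forall>f. sint (dlt y) f = integral\<^sup>L m1 f - integral\<^sup>L m2 f"
        using sint_rep[OF dlt_fsm] by blast
      have "sint (dlt y) (\<lambda>x. k x UNIV) = k y UNIV"
        using m(6) delta_int[OF m(1-4) _ gm gb] m(5) dlt_eval by metis
      then have SU: "S (dlt y) UNIV = k y UNIV" using kS[OF dlt_fsm] by simp
      have up: "S (dlt y) UNIV \<le> S0 (dlt y) UNIV"
        using SleS0 dlt_fsm dlt_pos unfolding op_le_def by blast
      have lo: "tensor (indicator {x}) (as_fsm \<mu>) (dlt y) UNIV \<le> S (dlt y) UNIV" if "x \<in> E" for x
        using TleS[OF that] dlt_fsm dlt_pos unfolding op_le_def by blast
      show ?thesis
      proof (cases "y \<in> E")
        case True
        have "infsum (\<lambda>x. dlt y {x}) E = infsum (\<lambda>x. dlt y {x}) {y}"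
          using True by (intro infsum_cong_neutral) (auto simp: dlt_single)
        then have "S0 (dlt y) UNIV = 1" by (simp add: S0_def dlt_single mU)
        moreover have "tensor (indicator {y}) (as_fsm \<mu>) (dlt y) UNIV = 1"
          using tensor_ind_eval[OF dlt_fsm[of y], of y \<mu> UNIV] by (simp add: dlt_single mU)
        ultimately show ?thesis using up lo[OF True] SU True by simp
      next
        case False
        have "infsum (\<lambda>x. dlt y {x}) E = 0"
          using False by (intro infsum_0) (auto simp: dlt_single)
        then have "S0 (dlt y) UNIV = 0" by (simp add: S0_def)
        moreover have "tensor (indicator {x0}) (as_fsm \<mu>) (dlt y) UNIV = 0"
          using tensor_ind_eval[OF dlt_fsm[of y], of x0 \<mu> UNIV] x0 False by (auto simp: dlt_single)
        ultimately show ?thesis using up lo[OF x0] SU False by simp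
      qed
    qed
    have "(\<lambda>x. k x UNIV) -` {1} \<inter> space borel \<in> sets borel"
      by (rule measurable_sets[OF gm single_borel])
    moreover have "(\<lambda>x. k x UNIV) -` {1} \<inter> space borel = E"
      using eq by (auto simp: indicator_def)
    ultimately show False using assms(1) by simp
  qed
  show ?thesis using P1 P2 P3 P4 P5 unfolding Fam_def by blast
qed


theorem mainTheorem9:
  fixes E :: "'a::polish_space set" and \<mu> :: "'a measure"
  assumes "E \<notin> sets (borel::'a measure)"
    and "prob_space \<mu>" and "sets \<mu> = sets (borel::'a measure)"
  shows "(\<forall>x\<in>E. weakly_cont (tensor (indicator {x}) (as_fsm \<mu>)))
    \<and> weakly_cont (tensor (\<lambda>_. 1) (as_fsm \<mu>))
    \<and> (\<forall>x\<in>E. op_le (tensor (indicator {x}) (as_fsm \<mu>)) (tensor (\<lambda>_. 1) (as_fsm \<mu>)))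
    \<and> (\<exists>S. is_op_sup ((\<lambda>x. tensor (indicator {x}) (as_fsm \<mu>)) ` E) S)
    \<and> (\<forall>S. is_op_sup ((\<lambda>x. tensor (indicator {x}) (as_fsm \<mu>)) ` E) S \<longrightarrow> \<not> weakly_cont S)"
  by (rule main_aux[OF assms])

end
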